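(* Let $\lambda$ and $g$ be as in the context, let $q(-1)=-1$ and let $q(0)$ be the fixed point of $g$ with negative multiplier. Then \[ |g'(x)|\ge |g'(q(0))|>1 \] for all $x\in[q(-1),\hat{q}(0)]\cup[q(0),\hat{q}(-1)]$.
   Context: There is a unique constant $\lambda=2.5029\ldots$ and a unique infinitely (period-doubling) renormalizable analytic unimodal map $g:[-1,1]\to[-1,1]$ solving the Cvitanović–Feigenbaum–Coullet–Tresser functional equation $g(x)=-\lambda\, g^{2}(-x/\lambda)$ for $-1\le x\le1$ (here $g^2=g\circ g$). Here unimodal means: $-1$ is the unique fixed point with positive multiplier, $g(1)=-1$, and $g$ has a unique maximum at an interior nondegenerate critical point $c^{(0)}$. Moreover $g$ is analytic on a complex neighborhood of $[-1,1]$, even, concave on $[-c^{(1)},c^{(1)}]$ where $c^{(1)}=g(c^{(0)})$ is the critical value, satisfies $g(c^{(1)})=-c^{(1)}/\lambda$ and $g'(c^{(1)})=-\lambda$, and has negative Schwarzian derivative. For $x\ne c^{(0)}$ the reflection $\hat{x}$ is the point with $g(\hat x)=g(x)$, $\hat x\ne x$; and $\hat{c}^{(0)}=c^{(0)}$. *)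

theory Defs
  imports "HOL-Analysis.Analysis"
begin

definition schwarzian :: "(real \<Rightarrow> real) \<Rightarrow> real \<Rightarrow> real" where
  "schwarzian f x =
     (deriv (deriv (deriv f))) x / deriv f x
       - 3/2 * ((deriv (deriv f)) x / deriv f x)^2"

end

theory Submission
  imports Defs "HOL-Complex_Analysis.Complex_Analysis"
begin


lemma real_deriv_of_holo:
  fixes G :: "complex \<Rightarrow> complex" and f :: "real \<Rightarrow> real"
  assumes S: "open S" and hol: "G holomorphic_on S"
    and eq: "\<And>t. complex_of_real t \<in> S \<Longrightarrow> G (complex_of_real t) = complex_of_real (f t)"
    and x: "complex_of_real x \<in> S"
  shows "(f has_real_derivative Re (deriv G (complex_of_real x))) (at x)"
    "deriv G (complex_of_real x) = complex_of_real (Re (deriv G (complex_of_real x)))"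
proof -
  define T where "T = complex_of_real -` S"
  have T: "open T" unfolding T_def
    by (rule open_vimage[OF S]) (intro continuous_intros)
  have xT: "x \<in> T" using x T_def by auto
  have d: "(G has_field_derivative deriv G (complex_of_real x)) (at (complex_of_real x))"
    using hol S x by (meson holomorphic_derivI)
  have v: "((\<lambda>t. G (complex_of_real t)) has_vector_derivative deriv G (complex_of_real x)) (at x)"
    by (rule has_vector_derivative_real_field[OF d])
  have v2: "((\<lambda>t. complex_of_real (f t)) has_vector_derivative deriv G (complex_of_real x)) (at x)"
    by (rule has_vector_derivative_transform_within_open[OF v T xT]) (auto simp: T_def eq)
  have "((\<lambda>t. Re (complex_of_real (f t))) has_field_derivative Re (deriv G (complex_of_real x))) (at x)"
    by (rule has_field_derivative_Re[OF v2])
  then show "(f has_real_derivative Re (deriv G (complex_of_real x))) (at x)" by simp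
  have "((\<lambda>t. Im (complex_of_real (f t))) has_field_derivative Im (deriv G (complex_of_real x))) (at x)"
    by (rule has_field_derivative_Im[OF v2])
  then have "((\<lambda>t. 0::real) has_field_derivative Im (deriv G (complex_of_real x))) (at x)" by simp
  moreover have "((\<lambda>t. 0::real) has_field_derivative 0) (at x)" by simp
  ultimately have "Im (deriv G (complex_of_real x)) = 0" using DERIV_unique by blast
  then show "deriv G (complex_of_real x) = complex_of_real (Re (deriv G (complex_of_real x)))"
    by (simp add: complex_eq_iff)
qed

lemma real_deriv_of_holo2:
  fixes G :: "complex \<Rightarrow> complex" and f :: "real \<Rightarrow> real"
  assumes S: "open S" and hol: "G holomorphic_on S"
    and eq: "\<And>t. complex_of_real t \<in> S \<Longrightarrow> G (complex_of_real t) = complex_of_real (f t)"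
  shows "\<And>x. complex_of_real x \<in> S \<Longrightarrow> (f has_real_derivative deriv f x) (at x)"
    "\<And>t. complex_of_real t \<in> S \<Longrightarrow> deriv G (complex_of_real t) = complex_of_real (deriv f t)"
proof -
  fix x assume x: "complex_of_real x \<in> S"
  note r = real_deriv_of_holo[OF S hol eq x]
  have "deriv f x = Re (deriv G (complex_of_real x))"
    using r(1) DERIV_imp_deriv by blast
  then show "(f has_real_derivative deriv f x) (at x)" "deriv G (complex_of_real x) = complex_of_real (deriv f x)"
    using r by auto
qed

lemma smooth3:
  fixes G :: "complex \<Rightarrow> complex" and f :: "real \<Rightarrow> real"
  assumes S: "open S" and hol: "G holomorphic_on S"
    and eq: "\<And>t. complex_of_real t \<in> S \<Longrightarrow> G (complex_of_real t) = complex_of_real (f t)"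
    and x: "complex_of_real x \<in> S"
  shows "(f has_real_derivative deriv f x) (at x)"
    "(deriv f has_real_derivative deriv (deriv f) x) (at x)"
    "(deriv (deriv f) has_real_derivative deriv (deriv (deriv f)) x) (at x)"
proof -
  have h1: "deriv G holomorphic_on S" using hol S by (rule holomorphic_deriv)
  have h2: "deriv (deriv G) holomorphic_on S" using h1 S by (rule holomorphic_deriv)
  note a = real_deriv_of_holo2[OF S hol eq]
  note b = real_deriv_of_holo2[OF S h1 a(2)]
  note c = real_deriv_of_holo2[OF S h2 b(2)]
  show "(f has_real_derivative deriv f x) (at x)" using a(1) x by blast
  show "(deriv f has_real_derivative deriv (deriv f) x) (at x)" using b(1) x by blast
  show "(deriv (deriv f) has_real_derivative deriv (deriv (deriv f)) x) (at x)" using c(1) x by blast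
qed



lemma MP:
  fixes g1 g2 g3 :: "real \<Rightarrow> real"
  assumes uv: "u \<le> v"
    and d1: "\<And>x. x \<in> {u..v} \<Longrightarrow> (g1 has_real_derivative g2 x) (at x)"
    and d2: "\<And>x. x \<in> {u..v} \<Longrightarrow> (g2 has_real_derivative g3 x) (at x)"
    and pos: "\<And>x. x \<in> {u..v} \<Longrightarrow> g1 x > 0"
    and sch: "\<And>x. x \<in> {u..v} \<Longrightarrow> g3 x * g1 x - 3/2*(g2 x)^2 < 0"
    and x: "x \<in> {u..v}"
  shows "g1 x \<ge> min (g1 u) (g1 v)"
proof -
  have cont: "continuous_on {u..v} g1"
    using d1 by (meson DERIV_isCont continuous_at_imp_continuous_on)
  obtain m where m: "m \<in> {u..v}" "\<And>y. y \<in> {u..v} \<Longrightarrow> g1 m \<le> g1 y"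
    using continuous_attains_inf[OF compact_Icc _ cont] uv by auto
  show ?thesis
  proof (cases "m = u \<or> m = v")
    case True
    then show ?thesis using m x by auto
  next
    case False
    then have um: "u < m" "m < v" using m by auto
    have "g2 m = 0"
    proof (rule DERIV_local_min[OF d1[OF m(1)]])
      show "0 < min (m - u) (v - m)" using um by auto
      show "\<forall>y. \<bar>m - y\<bar> < min (m - u) (v - m) \<longrightarrow> g1 m \<le> g1 y"
        using m(2) by (auto simp: abs_if split: if_splits)
    qed
    with sch[OF m(1)] pos[OF m(1)] have "g3 m * g1 m < 0" by simp
    with pos[OF m(1)] have g3m: "g3 m < 0" by (simp add: mult_less_0_iff)
    obtain d where d: "d > 0" "\<And>h. h > 0 \<Longrightarrow> h < d \<Longrightarrow> g2 m < g2 (m - h)"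
      using DERIV_neg_dec_left[OF d2[OF m(1)] g3m] by blast
    define h where "h = min d (m - u) / 2"
    have hmin: "min d (m - u) \<le> d" "min d (m - u) \<le> m - u" "min d (m - u) > 0" using d(1) um by auto
    have h: "h > 0" "h < d" "m - h \<ge> u" using hmin unfolding h_def by (auto simp: field_simps)
    have "g1 (m - h) < g1 m"
    proof (rule DERIV_pos_imp_increasing_open[of "m - h" m g1])
      show "m - h < m" using h by simp
      show "\<exists>y. (g1 has_real_derivative y) (at t) \<and> 0 < y" if "m - h < t" "t < m" for t
      proof -
        have "g2 m < g2 (m - (m - t))" using d(2)[of "m - t"] that h by auto
        then have "g2 t > 0" using \<open>g2 m = 0\<close> by simp
        moreover have "t \<in> {u..v}" using that h um by auto
        ultimately show ?thesis using d1 by blast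
      qed
      show "continuous_on {m - h..m} g1"
        by (rule continuous_on_subset[OF cont]) (use h um in auto)
    qed
    moreover have "g1 m \<le> g1 (m - h)" using m(2) h um by auto
    ultimately show ?thesis by simp
  qed
qed



lemma concave_deriv_le_slope:
  fixes f :: "real \<Rightarrow> real"
  assumes cc: "concave_on I f" and xI: "x \<in> I" and zI: "z \<in> I" and xz: "x < z"
    and D: "(f has_real_derivative D) (at z)"
  shows "D \<le> (f z - f x) / (z - x)"
proof (rule ccontr)
  define s where "s = (f z - f x) / (z - x)"
  assume "\<not> D \<le> (f z - f x) / (z - x)"
  then have Ds: "D - s > 0" by (simp add: s_def)
  have k: "((\<lambda>t. f t - s * t) has_real_derivative D - s) (at z)"
    using D by (auto intro!: derivative_eq_intros)
  obtain d where d: "d > 0" "\<And>h. h > 0 \<Longrightarrow> h < d \<Longrightarrow> f (z - h) - s * (z - h) < f z - s * z"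
    using DERIV_pos_inc_left[OF k Ds] by blast
  define h where "h = min d (z - x) / 2"
  have hmin: "min d (z - x) \<le> d" "min d (z - x) \<le> z - x" "min d (z - x) > 0" using d(1) xz by auto
  have h: "h > 0" "h < d" "z - h > x" using hmin unfolding h_def by (auto simp: field_simps)
  have cv: "convex_on I (\<lambda>t. - f t)" using cc by (simp add: concave_on_def)
  have "((\<lambda>t. - f t) x - (\<lambda>t. - f t) z) / (x - z) \<le> ((\<lambda>t. - f t) (z - h) - (\<lambda>t. - f t) z) / ((z - h) - z)"
    using convex_on_slope_le(2)[OF cv xI zI h(3)] h by simp
  then have "(f z - f (z - h)) / h \<le> s"
    unfolding s_def using xz h by (simp add: field_simps)
  then have "f z - f (z - h) \<le> s * h" using h by (simp add: divide_le_eq mult.commute)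
  moreover have "f (z - h) - s * (z - h) < f z - s * z" using d(2) h by auto
  ultimately show False by (simp add: algebra_simps)
qed

lemma concave_deriv_ge_slope:
  fixes f :: "real \<Rightarrow> real"
  assumes cc: "concave_on I f" and yI: "y \<in> I" and zI: "z \<in> I" and zy: "z < y"
    and D: "(f has_real_derivative D) (at z)"
  shows "D \<ge> (f y - f z) / (y - z)"
proof (rule ccontr)
  define s where "s = (f y - f z) / (y - z)"
  assume "\<not> D \<ge> (f y - f z) / (y - z)"
  then have Ds: "D - s < 0" by (simp add: s_def)
  have k: "((\<lambda>t. f t - s * t) has_real_derivative D - s) (at z)"
    using D by (auto intro!: derivative_eq_intros)
  obtain d where d: "d > 0" "\<And>h. h > 0 \<Longrightarrow> h < d \<Longrightarrow> f z - s * z > f (z + h) - s * (z + h)"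
    using DERIV_neg_dec_right[OF k Ds] by blast
  define h where "h = min d (y - z) / 2"
  have hmin: "min d (y - z) \<le> d" "min d (y - z) \<le> y - z" "min d (y - z) > 0" using d(1) zy by auto
  have h: "h > 0" "h < d" "z + h < y" using hmin unfolding h_def by (auto simp: field_simps)
  have cv: "convex_on I (\<lambda>t. - f t)" using cc by (simp add: concave_on_def)
  have "((\<lambda>t. - f t) z - (\<lambda>t. - f t) (z + h)) / (z - (z + h)) \<le> ((\<lambda>t. - f t) z - (\<lambda>t. - f t) y) / (z - y)"
    using convex_on_slope_le(1)[OF cv zI yI _ h(3)] h by simp
  then have "(f (z + h) - f z) / h \<ge> s"
    unfolding s_def using zy h by (simp add: field_simps)
  then have "f (z + h) - f z \<ge> s * h" using h by (simp add: le_divide_eq mult.commute)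
  moreover have "f z - s * z > f (z + h) - s * (z + h)" using d(2) h by auto
  ultimately show False by (simp add: algebra_simps)
qed

lemma comp_derivs:
  fixes g g1 g2 g3 :: "real \<Rightarrow> real"
  assumes a0: "(g has_real_derivative g1 x) (at x)"
    and a1: "(g1 has_real_derivative g2 x) (at x)"
    and a2: "(g2 has_real_derivative g3 x) (at x)"
    and b1: "(g1 has_real_derivative g2 (g x)) (at (g x))"
    and b2: "(g2 has_real_derivative g3 (g x)) (at (g x))"
  shows "((\<lambda>t. g1 (g t) * g1 t) has_real_derivative (g2 (g x) * (g1 x)^2 + g1 (g x) * g2 x)) (at x)"
    "((\<lambda>t. g2 (g t) * (g1 t)^2 + g1 (g t) * g2 t) has_real_derivative
        (g3 (g x) * (g1 x)^3 + 3 * g2 (g x) * g1 x * g2 x + g1 (g x) * g3 x)) (at x)"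
proof -
  have c1: "((\<lambda>t. g1 (g t)) has_real_derivative g2 (g x) * g1 x) (at x)"
    using DERIV_chain2[OF b1 a0] .
  have c2: "((\<lambda>t. g2 (g t)) has_real_derivative g3 (g x) * g1 x) (at x)"
    using DERIV_chain2[OF b2 a0] .
  show "((\<lambda>t. g1 (g t) * g1 t) has_real_derivative (g2 (g x) * (g1 x)^2 + g1 (g x) * g2 x)) (at x)"
    using DERIV_mult[OF c1 a1] by (simp add: power2_eq_square algebra_simps)
  have sq: "((\<lambda>t. (g1 t)^2) has_real_derivative 2 * g1 x * g2 x) (at x)"
    using DERIV_mult[OF a1 a1] by (simp add: power2_eq_square algebra_simps)
  show "((\<lambda>t. g2 (g t) * (g1 t)^2 + g1 (g t) * g2 t) has_real_derivative
        (g3 (g x) * (g1 x)^3 + 3 * g2 (g x) * g1 x * g2 x + g1 (g x) * g3 x)) (at x)"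
    using DERIV_add[OF DERIV_mult[OF c2 sq] DERIV_mult[OF c1 a2]]
    by (simp add: power2_eq_square power3_eq_cube algebra_simps)
qed

lemma schw_comp:
  fixes A B C a1 a2 a3 :: real
  assumes "C * A - 3/2 * B^2 < 0" "a3 * a1 - 3/2 * a2^2 < 0" "A \<noteq> 0" "a1 \<noteq> 0"
  shows "(C * a1^3 + 3 * B * a1 * a2 + A * a3) * (A * a1) - 3/2 * (B * a1^2 + A * a2)^2 < 0"
proof -
  have e: "(C * a1^3 + 3 * B * a1 * a2 + A * a3) * (A * a1) - 3/2 * (B * a1^2 + A * a2)^2
     = a1^4 * (C * A - 3/2 * B^2) + A^2 * (a3 * a1 - 3/2 * a2^2)"
    by (simp add: power2_eq_square power3_eq_cube power4_eq_xxxx algebra_simps)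
  have "a1^4 > 0" "A^2 > 0" using assms by auto
  then have "a1^4 * (C * A - 3/2 * B^2) < 0" "A^2 * (a3 * a1 - 3/2 * a2^2) < 0"
    using assms by (auto simp: mult_pos_neg)
  then show ?thesis using e by linarith
qed

lemma schw_form:
  fixes a b c :: real
  assumes "a \<noteq> 0" "c / a - 3/2 * (b / a)^2 < 0"
  shows "c * a - 3/2 * b^2 < 0"
proof -
  have "a^2 > 0" using assms by auto
  have "(c / a - 3/2 * (b / a)^2) * a^2 = c * a - 3/2 * b^2"
    using assms(1) by (simp add: power2_eq_square field_simps)
  moreover have "(c / a - 3/2 * (b / a)^2) * a^2 < 0"
    using assms \<open>a^2 > 0\<close> by (simp add: mult_neg_pos)
  ultimately show ?thesis by simp
qed

lemma eq_at_right_end: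
  fixes f h :: "real \<Rightarrow> real"
  assumes "isCont f v" "isCont h v" "u < v" "\<And>x. u < x \<Longrightarrow> x < v \<Longrightarrow> f x = h x"
  shows "f v = h v"
proof -
  have "(f \<longlongrightarrow> f v) (at_left v)" using assms(1) by (simp add: isCont_def filterlim_at_split)
  moreover have "(h \<longlongrightarrow> h v) (at_left v)" using assms(2) by (simp add: isCont_def filterlim_at_split)
  moreover have "eventually (\<lambda>x. h x = f x) (at_left v)"
    unfolding eventually_at_left_field using assms(3,4) by (intro exI[of _ u]) auto
  ultimately have "(f \<longlongrightarrow> h v) (at_left v)" using Lim_transform_eventually by (metis (mono_tags, lifting) eventually_mono tendsto_cong)
  then show ?thesis using \<open>(f \<longlongrightarrow> f v) (at_left v)\<close> tendsto_unique trivial_limit_at_left_real by blast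
qed

lemma eq_at_left_end:
  fixes f h :: "real \<Rightarrow> real"
  assumes "isCont f u" "isCont h u" "u < v" "\<And>x. u < x \<Longrightarrow> x < v \<Longrightarrow> f x = h x"
  shows "f u = h u"
proof -
  have "(f \<longlongrightarrow> f u) (at_right u)" using assms(1) by (simp add: isCont_def filterlim_at_split)
  moreover have "(h \<longlongrightarrow> h u) (at_right u)" using assms(2) by (simp add: isCont_def filterlim_at_split)
  moreover have "eventually (\<lambda>x. h x = f x) (at_right u)"
    unfolding eventually_at_right_field using assms(3,4) by (intro exI[of _ v]) auto
  ultimately have "(f \<longlongrightarrow> h u) (at_right u)" by (metis (mono_tags, lifting) eventually_mono tendsto_cong)
  then show ?thesis using \<open>(f \<longlongrightarrow> f u) (at_right u)\<close> tendsto_unique trivial_limit_at_right_real by blast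
qed
theorem mainTheorem3:
  fixes g :: "real \<Rightarrow> real" and lam :: real
    and c0 q0 hq0 hm1 :: real
  assumes lam_bounds: "2.5029 \<le> lam" "lam < 2.503"
    and maps: "\<forall>x\<in>{-1..1}. g x \<in> {-1..1}"
    and feig: "\<forall>x\<in>{-1..1}. g x = - lam * g (g (- x / lam))"
    and analytic: "\<exists>S G. open S \<and> complex_of_real ` {-1..1} \<subseteq> S \<and> G holomorphic_on S
                     \<and> (\<forall>x. complex_of_real x \<in> S \<longrightarrow> G (complex_of_real x) = complex_of_real (g x))"
    and fix_m1: "g (-1) = -1" "deriv g (-1) > 0"
    and uniq_pos_fix: "\<forall>x\<in>{-1..1}. g x = x \<and> deriv g x > 0 \<longrightarrow> x = -1"
    and g1: "g 1 = -1"
    and crit: "c0 \<in> {-1<..<1}" "deriv g c0 = 0" "deriv (deriv g) c0 \<noteq> 0"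
    and maxim: "\<forall>x\<in>{-1..1}. x \<noteq> c0 \<longrightarrow> g x < g c0"
    and even: "\<forall>x\<in>{-1..1}. g (- x) = g x"
    and concave: "concave_on {- g c0 .. g c0} g"
    and critval: "g (g c0) = - g c0 / lam" "deriv g (g c0) = - lam"
    and schw: "\<forall>x\<in>{-1..1}. deriv g x \<noteq> 0 \<longrightarrow> schwarzian g x < 0"
    and q0: "q0 \<in> {-1..1}" "g q0 = q0" "deriv g q0 < 0"
    and hq0: "hq0 \<in> {-1..1}" "hq0 \<noteq> q0" "g hq0 = g q0"
    and hm1: "hm1 \<in> {-1..1}" "hm1 \<noteq> -1" "g hm1 = g (-1)"
  shows "\<forall>x \<in> {-1..hq0} \<union> {q0..hm1}.
           \<bar>deriv g x\<bar> \<ge> \<bar>deriv g q0\<bar> \<and> \<bar>deriv g q0\<bar> > 1"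
proof -
  define g1 where "g1 = deriv g"
  define g2 where "g2 = deriv g1"
  define g3 where "g3 = deriv g2"
  obtain S G where SG: "open S" "complex_of_real ` {-1..1} \<subseteq> S" "G holomorphic_on S"
    "\<And>x. complex_of_real x \<in> S \<Longrightarrow> G (complex_of_real x) = complex_of_real (g x)"
    using analytic by blast
  have inS: "complex_of_real x \<in> S" if "x \<in> {-1..1}" for x using SG(2) that by auto
  have D1: "(g has_real_derivative g1 x) (at x)" if "x \<in> {-1..1}" for x
    unfolding g1_def using smooth3(1)[OF SG(1,3) SG(4) inS[OF that]] .
  have D2: "(g1 has_real_derivative g2 x) (at x)" if "x \<in> {-1..1}" for x
    unfolding g2_def g1_def using smooth3(2)[OF SG(1,3) SG(4) inS[OF that]] .
  have D3: "(g2 has_real_derivative g3 x) (at x)" if "x \<in> {-1..1}" for x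
    unfolding g3_def g2_def g1_def using smooth3(3)[OF SG(1,3) SG(4) inS[OF that]] .
  have cg: "isCont g x" if "x \<in> {-1..1}" for x using D1[OF that] by (rule DERIV_isCont)
  have cg1: "isCont g1 x" if "x \<in> {-1..1}" for x using D2[OF that] by (rule DERIV_isCont)
  have cgo: "continuous_on A g" if "A \<subseteq> {-1..1}" for A
    using cg that by (meson continuous_at_imp_continuous_on subsetD)
  have cg1o: "continuous_on A g1" if "A \<subseteq> {-1..1}" for A
    using cg1 that by (meson continuous_at_imp_continuous_on subsetD)
  have sch: "g3 x * g1 x - 3/2 * (g2 x)^2 < 0" if "x \<in> {-1..1}" "g1 x \<noteq> 0" for x
    using schw that schw_form[of "g1 x" "g3 x" "g2 x"] unfolding schwarzian_def g1_def g2_def g3_def by auto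
  have lam0: "lam > 2" using lam_bounds by simp
  have mapsI: "g x \<in> {-1..1}" if "x \<in> {-1..1}" for x using maps that by blast
  have feigI: "g x = - lam * g (g (- x / lam))" if "x \<in> {-1..1}" for x using feig that by blast
  have evenI: "g (- x) = g x" if "x \<in> {-1..1}" for x using even that by blast
  have c00: "c0 = 0"
  proof (rule ccontr)
    assume "c0 \<noteq> 0"
    then have "-c0 \<noteq> c0" by simp
    moreover have "-c0 \<in> {-1..1}" using crit(1) by auto
    ultimately have "g (-c0) < g c0" using maxim by blast
    moreover have "g (-c0) = g c0" using evenI crit(1) by auto
    ultimately show False by simp
  qed
  define c1 where "c1 = g 0"
  have maxle: "g y \<le> c1" if "y \<in> {-1..1}" for y
    using maxim that c00 unfolding c1_def by (cases "y = 0") (auto intro: less_imp_le)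
  have maxlt: "g y < c1" if "y \<in> {-1..1}" "y \<noteq> 0" for y
    using maxim that c00 unfolding c1_def by auto
  have g1_0: "g1 0 = 0" using crit(2) c00 g1_def by simp
  have gc1: "g c1 = - c1 / lam" and g1c1: "g1 c1 = - lam"
    using critval c00 unfolding c1_def g1_def by auto
  have c1I: "c1 \<in> {-1..1}" using mapsI[of 0] c1_def by auto
  have c1pos: "c1 > 0"
  proof -
    have "c1 \<noteq> 0" using g1c1 g1_0 lam0 by auto
    moreover have "\<not> c1 < 0"
    proof
      assume "c1 < 0"
      then have "g c1 > 0" using gc1 lam0 by (simp add: divide_neg_pos)
      moreover have "g c1 \<le> c1" using maxle c1I by blast
      ultimately show False using \<open>c1 < 0\<close> by simp
    qed
    ultimately show ?thesis by simp
  qed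
  have c1lt: "c1 < 1"
  proof -
    have "c1 \<noteq> 1"
    proof
      assume "c1 = 1"
      then have "-1 = - 1 / lam" using gc1 g1 by simp
      then show False using lam0 by (simp add: field_simps)
    qed
    then show ?thesis using c1I by simp
  qed
  have cc: "concave_on {-c1..c1} g" using concave c00 c1_def by simp
  have negK: "g1 z < 0" if "0 < z" "z \<le> c1" for z
  proof -
    have zI: "z \<in> {-1..1}" using that c1lt by auto
    have "g1 z \<le> (g z - g 0) / (z - 0)"
      by (rule concave_deriv_le_slope[OF cc _ _ that(1) D1[OF zI]]) (use that c1pos in auto)
    moreover have "g z - g 0 < 0" using maxlt[OF zI] that c1_def by auto
    ultimately show ?thesis using that by (smt (verit) divide_neg_pos)
  qed
  have posK: "g1 z > 0" if "-c1 \<le> z" "z < 0" for z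
  proof -
    have zI: "z \<in> {-1..1}" using that c1lt by auto
    have "g1 z \<ge> (g 0 - g z) / (0 - z)"
      by (rule concave_deriv_ge_slope[OF cc _ _ that(2) D1[OF zI]]) (use that c1pos in auto)
    moreover have "g 0 - g z > 0" using maxlt[OF zI] that c1_def by auto
    ultimately show ?thesis using that by (smt (verit) divide_pos_pos)
  qed

  define p where "p = 1 / lam"
  have p01: "0 < p" "p < 1/2" using lam0 unfolding p_def by (auto simp: field_simps)
  have pI: "p \<in> {-1..1}" "-p \<in> {-1..1}" using p01 by auto
  define a where "a = g p"
  have aI: "a \<in> {-1..1}" using mapsI[OF pI(1)] a_def by simp
  have gga: "g a = p"
  proof -
    have "g 1 = - lam * g (g (- 1 / lam))" using feigI[of 1] by simp
    moreover have "g (- 1 / lam) = g p" using evenI[OF pI(1)] p_def by simp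
    ultimately have "-1 = - lam * g a" using g1 a_def by simp
    then show ?thesis using lam0 unfolding p_def by (simp add: field_simps)
  qed
  have pc1: "p \<le> c1" using maxle[OF aI] gga by simp
  have did: "g1 x = g1 (g (- x / lam)) * g1 (- x / lam)" if "x \<in> {-1<..<1}" for x
  proof -
    have xI: "x \<in> {-1..1}" using that by auto
    have yI: "- x / lam \<in> {-1..1}" using that lam0 by (auto simp: field_simps)
    have wI: "g (- x / lam) \<in> {-1..1}" using mapsI[OF yI] .
    have dy: "((\<lambda>t. - t / lam) has_real_derivative - 1 / lam) (at x)"
      using lam0 by (auto intro!: derivative_eq_intros)
    have c1': "((\<lambda>t. g (- t / lam)) has_real_derivative g1 (- x / lam) * (- 1 / lam)) (at x)"
      using DERIV_chain2[OF D1[OF yI] dy] .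
    have c2': "((\<lambda>t. g (g (- t / lam))) has_real_derivative g1 (g (- x / lam)) * (g1 (- x / lam) * (- 1 / lam))) (at x)"
      using DERIV_chain2[OF D1[OF wI] c1'] .
    have c3: "((\<lambda>t. - lam * g (g (- t / lam))) has_real_derivative - lam * (g1 (g (- x / lam)) * (g1 (- x / lam) * (- 1 / lam)))) (at x)"
      using DERIV_cmult[OF c2'] .
    have c4: "(g has_real_derivative - lam * (g1 (g (- x / lam)) * (g1 (- x / lam) * (- 1 / lam)))) (at x)"
      by (rule has_field_derivative_transform_within_open[OF c3, of "{-1<..<1}"]) (use that feigI in auto)
    have "g1 x = - lam * (g1 (g (- x / lam)) * (g1 (- x / lam) * (- 1 / lam)))"
      using DERIV_unique[OF D1[OF xI] c4] .
    then show ?thesis using lam0 by (simp add: field_simps)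
  qed
  have dodd: "g1 (- x) = - g1 x" if "x \<in> {-1<..<1}" for x
  proof -
    have xI: "x \<in> {-1..1}" "-x \<in> {-1..1}" using that by auto
    have c1': "((\<lambda>t. g (- t)) has_real_derivative g1 (- x) * (- 1)) (at x)"
      using DERIV_chain2[OF D1[OF xI(2)] DERIV_minus[OF DERIV_ident]] .
    have c4: "(g has_real_derivative g1 (- x) * (- 1)) (at x)"
      by (rule has_field_derivative_transform_within_open[OF c1', of "{-1<..<1}"]) (use that evenI in auto)
    show ?thesis using DERIV_unique[OF D1[OF xI(1)] c4] by simp
  qed
  have incK: "g u < g v" if "-c1 \<le> u" "u < v" "v \<le> 0" for u v
  proof (rule DERIV_pos_imp_increasing_open[of u v g])
    show "u < v" by fact
    show "\<exists>y. (g has_real_derivative y) (at t) \<and> 0 < y" if "u < t" "t < v" for t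
      using D1[of t] posK[of t] that \<open>-c1 \<le> u\<close> \<open>v \<le> 0\<close> c1lt by auto
    show "continuous_on {u..v} g" by (rule cgo) (use that c1lt in auto)
  qed
  have decK: "g u > g v" if "0 \<le> u" "u < v" "v \<le> c1" for u v
  proof (rule DERIV_neg_imp_decreasing_open[of u v g])
    show "u < v" by fact
    show "\<exists>y. (g has_real_derivative y) (at t) \<and> y < 0" if "u < t" "t < v" for t
      using D1[of t] negK[of t] that \<open>0 \<le> u\<close> \<open>v \<le> c1\<close> c1lt by auto
    show "continuous_on {u..v} g" by (rule cgo) (use that c1lt in auto)
  qed
  have gmc1: "g (-c1) = - c1 / lam" using evenI c1I gc1 by simp
  have rangeK: "g y \<ge> - c1 / lam" if "-c1 \<le> y" "y \<le> c1" for y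
  proof (cases "y \<le> 0")
    case True
    then show ?thesis using incK[of "-c1" y] that gmc1 by (cases "y = -c1") auto
  next
    case False
    then show ?thesis using decK[of y c1] that gc1 by (cases "y = c1") auto
  qed
  have c1lam: "c1 / lam \<le> c1" using c1pos lam0 by (simp add: field_simps)
  have nz: "g1 z \<noteq> 0" if "z \<in> {-1<..<1}" "z \<noteq> 0" for z
  proof
    assume z0: "g1 z = 0"
    define y where "y = - z / lam"
    have yK: "-c1 \<le> y" "y \<le> c1" "y \<noteq> 0"
    proof -
      have "\<bar>y\<bar> = \<bar>z\<bar> / lam" unfolding y_def using lam0 by (simp add: abs_div)
      also have "\<dots> < 1 / lam" using that lam0 by (intro divide_strict_right_mono) auto
      finally have "\<bar>y\<bar> < p" unfolding p_def .
      then show "-c1 \<le> y" "y \<le> c1" using pc1 by auto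
      show "y \<noteq> 0" using that lam0 unfolding y_def by auto
    qed
    have g1y: "g1 y \<noteq> 0"
      using negK[of y] posK[of y] yK by (cases "y > 0") auto
    have "g1 (g y) * g1 y = 0" using did[OF that(1)] z0 y_def by simp
    then have g1w: "g1 (g y) = 0" using g1y by simp
    have w1: "g y \<le> c1" using maxle[of y] yK c1lt by auto
    have w2: "g y \<ge> - c1" using rangeK[OF yK(1,2)] c1lam by linarith
    have w0: "g y = 0"
      using negK[of "g y"] posK[of "g y"] g1w w1 w2 by (cases "g y > 0"; cases "g y < 0") auto
    have "g z = - lam * g (g y)" using feigI[of z] that y_def by auto
    then have "g z = - lam * c1" using w0 c1_def by simp
    moreover have "g z \<ge> -1" using mapsI[of z] that by auto
    ultimately have "lam * c1 \<le> 1" by simp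
    then have "c1 \<le> p" unfolding p_def using lam0 by (simp add: field_simps)
    then have c1p: "c1 = p" using pc1 by simp
    have "g (g c1) = c1" using gga c1p a_def by simp
    moreover have "g c1 \<noteq> 0" using gc1 c1pos lam0 by simp
    moreover have "g c1 \<in> {-1..1}" using mapsI c1I by blast
    ultimately show False using maxlt[of "g c1"] by simp
  qed
  have posL: "g1 z > 0" if zz: "-1 \<le> z" "z < 0" for z
  proof (cases "z \<ge> -c1")
    case True then show ?thesis using posK that by simp
  next
    case False
    show ?thesis
    proof (cases "z = -1")
      case True then show ?thesis using fix_m1 g1_def by simp
    next
      case zm1: False
      show ?thesis
      proof (rule ccontr)
        assume "\<not> g1 z > 0"
        then have "g1 z \<le> 0" by simp
        moreover have "g1 (-c1) > 0" using posK c1pos by simp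
        ultimately obtain t where t: "z \<le> t" "t \<le> -c1" "g1 t = 0"
          using IVT'[of g1 z 0 "-c1"] cg1o[of "{z..-c1}"] False zz c1lt c1pos by auto
        then show False using nz[of t] zz zm1 c1pos by auto
      qed
    qed
  qed
  have negR: "g1 z < 0" if zz: "0 < z" "z < 1" for z
  proof (cases "z \<le> c1")
    case True then show ?thesis using negK that by simp
  next
    case False
    show ?thesis
    proof (rule ccontr)
      assume "\<not> g1 z < 0"
      then have "g1 z \<ge> 0" by simp
      moreover have "g1 c1 < 0" using negK c1pos by simp
      ultimately obtain t where t: "c1 \<le> t" "t \<le> z" "g1 t = 0"
        using IVT'[of g1 c1 0 z] cg1o[of "{c1..z}"] False zz c1pos by auto
      then show False using nz[of t] zz c1pos by auto
    qed
  qed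
  have incL: "g u < g v" if "-1 \<le> u" "u < v" "v \<le> 0" for u v
  proof (rule DERIV_pos_imp_increasing_open[of u v g])
    show "u < v" by fact
    show "\<exists>y. (g has_real_derivative y) (at t) \<and> 0 < y" if "u < t" "t < v" for t
      using D1[of t] posL[of t] that \<open>-1 \<le> u\<close> \<open>v \<le> 0\<close> by auto
    show "continuous_on {u..v} g" by (rule cgo) (use that in auto)
  qed
  have decR: "g u > g v" if "0 \<le> u" "u < v" "v \<le> 1" for u v
  proof (rule DERIV_neg_imp_decreasing_open[of u v g])
    show "u < v" by fact
    show "\<exists>y. (g has_real_derivative y) (at t) \<and> y < 0" if "u < t" "t < v" for t
      using D1[of t] negR[of t] that \<open>0 \<le> u\<close> \<open>v \<le> 1\<close> by auto
    show "continuous_on {u..v} g" by (rule cgo) (use that in auto)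
  qed
  have gtx: "g y > y" if yy: "-1 < y" "y \<le> 0" for y
  proof (rule ccontr)
    assume "\<not> g y > y"
    then have "g y - y \<le> 0" by simp
    moreover have "g 0 - 0 \<ge> 0" using c1pos c1_def by simp
    moreover have "continuous_on {y..0} (\<lambda>t. g t - t)"
      using cgo[of "{y..0}"] yy by (auto intro!: continuous_intros)
    ultimately obtain t where t: "y \<le> t" "t \<le> 0" "g t - t = 0"
      using IVT'[of "\<lambda>t. g t - t" y 0 0] yy by auto
    have "t \<noteq> 0" using t c1pos c1_def by auto
    then have "g1 t > 0" using posL[of t] t yy by auto
    then have "t = -1" using uniq_pos_fix t yy g1_def by auto
    then show False using t yy by simp
  qed
  have fixuniq: "u = v" if "0 < u" "u \<le> 1" "0 < v" "v \<le> 1" "g u = u" "g v = v" for u v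
  proof (rule ccontr)
    assume "u \<noteq> v"
    then show False using decR[of u v] decR[of v u] that by (cases "u < v") auto
  qed
  have q0pos: "0 < q0" "q0 \<le> 1"
  proof -
    have g1q: "g1 q0 < 0" using q0(3) g1_def by simp
    show "q0 \<le> 1" using q0(1) by simp
    show "0 < q0"
    proof (rule ccontr)
      assume "\<not> 0 < q0"
      then have "q0 \<le> 0" by simp
      then show False using posL[of q0] g1_0 g1q q0(1) by (cases "q0 = 0") auto
    qed
  qed
  have gsq: "g (g y) < y" if "0 \<le> y" "y < p" for y
  proof -
    have l1: "lam * y \<ge> 0" using that lam0 by simp
    have l2: "lam * y < 1" using that lam0 p_def by (simp add: field_simps)
    have xI: "- lam * y \<in> {-1..1}" using l1 l2 by auto
    have "g (- lam * y) = - lam * g (g y)" using feigI[OF xI] lam0 by simp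
    moreover have "g (- lam * y) > - lam * y"
      by (rule gtx) (use l1 l2 in auto)
    ultimately show ?thesis using lam0 by simp
  qed
  have fixJ: "g (- lam * y) = - lam * y" if "-p \<le> y" "y \<le> p" "g (g y) = y" for y
  proof -
    have l1: "lam * y \<le> 1" using that lam0 p_def by (simp add: field_simps)
    have l2: "lam * y \<ge> -1" using that lam0 p_def by (simp add: field_simps)
    have xI: "- lam * y \<in> {-1..1}" using l1 l2 by auto
    show ?thesis using feigI[OF xI] lam0 that by simp
  qed
  define F1 where "F1 = (\<lambda>t. g1 (g t) * g1 t)"
  define F2 where "F2 = (\<lambda>t. g2 (g t) * (g1 t)^2 + g1 (g t) * g2 t)"
  define F3 where "F3 = (\<lambda>t. g3 (g t) * (g1 t)^3 + 3 * g2 (g t) * g1 t * g2 t + g1 (g t) * g3 t)"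
  define H where "H = (\<lambda>t. g (g t) - t)"
  have DF1: "(F1 has_real_derivative F2 t) (at t)" if "t \<in> {-1..1}" for t
    unfolding F1_def F2_def using comp_derivs(1)[OF D1[OF that] D2[OF that] D3[OF that] D2[OF mapsI[OF that]] D3[OF mapsI[OF that]]] .
  have DF2: "(F2 has_real_derivative F3 t) (at t)" if "t \<in> {-1..1}" for t
    unfolding F3_def F2_def using comp_derivs(2)[OF D1[OF that] D2[OF that] D3[OF that] D2[OF mapsI[OF that]] D3[OF mapsI[OF that]]] .
  have DH: "(H has_real_derivative F1 t - 1) (at t)" if "t \<in> {-1..1}" for t
  proof -
    have "((\<lambda>t. g (g t)) has_real_derivative g1 (g t) * g1 t) (at t)"
      using DERIV_chain2[OF D1[OF mapsI[OF that]] D1[OF that]] .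
    then show ?thesis unfolding H_def F1_def by (auto intro!: derivative_eq_intros)
  qed
  have schF: "F3 t * F1 t - 3/2 * (F2 t)^2 < 0" if "t \<in> {-1..1}" "g1 t \<noteq> 0" "g1 (g t) \<noteq> 0" for t
    unfolding F1_def F2_def F3_def
    by (rule schw_comp[OF sch[OF mapsI[OF that(1)] that(3)] sch[OF that(1,2)] that(3,2)])
  have constD: "D = 0" if "(f has_real_derivative D) (at x)" "x \<in> {u<..<v}" "\<And>t. t \<in> {u<..<v} \<Longrightarrow> f t = c"
    for f :: "real \<Rightarrow> real" and D x u v c
  proof -
    have "(f has_real_derivative 0) (at x)"
      by (rule has_field_derivative_transform_within_open[of "\<lambda>t. c" 0 x "{u<..<v}"]) (use that in auto)
    then show ?thesis using DERIV_unique[OF that(1)] by simp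
  qed
  have Hp: "H p = 0" unfolding H_def using gga a_def by simp
  have F1p: "F1 p \<ge> 1"
  proof (rule ccontr)
    assume "\<not> F1 p \<ge> 1"
    then have "F1 p - 1 < 0" by simp
    then obtain d where d: "d > 0" "\<And>h. h > 0 \<Longrightarrow> h < d \<Longrightarrow> H p < H (p - h)"
      using DERIV_neg_dec_left[OF DH[OF pI(1)]] by blast
    define h where "h = min d p / 2"
    have hmin: "min d p \<le> d" "min d p \<le> p" "min d p > 0" using d(1) p01 by auto
    have h: "h > 0" "h < d" "p - h \<ge> 0" using hmin unfolding h_def by (auto simp: field_simps)
    have "H (p - h) < 0" unfolding H_def using gsq[of "p - h"] h by simp
    moreover have "H p < H (p - h)" using d(2) h by simp
    ultimately show False using Hp by simp
  qed
  have ap: "a = p"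
  proof (rule ccontr)
    assume anp: "a \<noteq> p"
    have ac1: "a \<le> c1" "- c1 / lam \<le> a"
      using maxle[OF pI(1)] rangeK[of p] pc1 p01 c1pos a_def by auto
    have c1lp: "c1 / lam \<le> p" unfolding p_def using c1lt lam0 by (simp add: divide_right_mono)
    show False
    proof (cases "a < p")
      case True
      define y where "y = - lam * a"
      have gy: "g y = y" unfolding y_def by (rule fixJ) (use ac1 c1lp True gga a_def in auto)
      have yI: "y \<in> {-1..1}"
      proof -
        have "lam * a \<le> 1" using True lam0 p_def by (simp add: field_simps)
        moreover have "lam * a \<ge> - c1" using ac1 lam0 by (simp add: field_simps)
        ultimately show ?thesis using y_def c1lt by auto
      qed
      have ypos: "y > 0"
      proof (rule ccontr)
        assume "\<not> y > 0"
        show False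
        proof (cases "y = -1")
          case True
          then have "a = p" using lam0 unfolding y_def p_def by (simp add: field_simps)
          then show False using anp by simp
        next
          case False
          then show False using gtx[of y] gy yI \<open>\<not> y > 0\<close> by auto
        qed
      qed
      have ay: "a = - y / lam" unfolding y_def using lam0 by simp
      have "p = g (y / lam)" using gga ay evenI[of "y / lam"] yI lam0 ypos
        by (simp add: field_simps)
      moreover have "g (y / lam) > g y"
        by (rule decR) (use ypos yI lam0 in \<open>auto simp: field_simps\<close>)
      ultimately have yp: "y < p" using gy by simp
      have "g (- lam * y) = - lam * y" by (rule fixJ) (use yp ypos gy in auto)
      moreover have "g (- lam * y) > - lam * y"
        by (rule gtx) (use yp ypos lam0 p_def in \<open>auto simp: field_simps\<close>)
      ultimately show False by simp
    next
      case False
      then have pa: "p < a" using anp by simp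
      have inK: "t \<in> {-1..1}" "0 < t" "t \<le> c1" if "t \<in> {p..a}" for t
        using that p01 ac1 c1lt by auto
      have gI: "g t \<in> {p..a}" if "t \<in> {p..a}" for t
      proof -
        have "g t \<le> a" using decK[of p t] that p01 ac1 a_def by (cases "t = p") auto
        moreover have "g t \<ge> p" using decK[of t a] that p01 ac1 gga by (cases "t = a") auto
        ultimately show ?thesis by simp
      qed
      have g1n: "g1 t < 0" "g1 (g t) < 0" if "t \<in> {p..a}" for t
        using negK inK[OF that] inK[OF gI[OF that]] by auto
      have F1pos: "F1 t > 0" if "t \<in> {p..a}" for t
        using g1n[OF that] unfolding F1_def by (simp add: mult_neg_neg)
      have F1a: "F1 a = F1 p" unfolding F1_def using gga a_def by simp
      have F1ge: "F1 t \<ge> 1" if "t \<in> {p..a}" for t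
      proof -
        have "F1 t \<ge> min (F1 p) (F1 a)"
        proof (rule MP[of p a F1 F2 F3])
          show "p \<le> a" using pa by simp
          show "(F1 has_real_derivative F2 x) (at x)" if "x \<in> {p..a}" for x using DF1 inK[OF that] by blast
          show "(F2 has_real_derivative F3 x) (at x)" if "x \<in> {p..a}" for x using DF2 inK[OF that] by blast
          show "F1 x > 0" if "x \<in> {p..a}" for x using F1pos that by blast
          show "F3 x * F1 x - 3/2 * (F2 x)^2 < 0" if "x \<in> {p..a}" for x
            using schF[of x] inK[OF that] g1n[OF that] by auto
          show "t \<in> {p..a}" by fact
        qed
        then show ?thesis using F1a F1p by simp
      qed
      have H0: "H t = 0" if "t \<in> {p..a}" for t
      proof -
        have dd: "\<exists>y. (H has_real_derivative y) (at s) \<and> y \<ge> 0" if "s \<in> {p..a}" for s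
          using DH[OF inK(1)[OF that]] F1ge[OF that] by auto
        have "H p \<le> H t"
          by (rule DERIV_nonneg_imp_nondecreasing) (use that dd in auto)
        moreover have "H t \<le> H a"
          by (rule DERIV_nonneg_imp_nondecreasing) (use that dd in auto)
        moreover have "H a = 0" unfolding H_def using gga a_def by simp
        ultimately show ?thesis using Hp by simp
      qed
      have F1one: "F1 t = 1" if "t \<in> {p<..<a}" for t
      proof -
        have "t \<in> {-1..1}" using inK that by auto
        then have "F1 t - 1 = 0" using constD[OF DH[of t] that, of 0] H0 by auto
        then show ?thesis by simp
      qed
      have F2zero: "F2 t = 0" if "t \<in> {p<..<a}" for t
      proof -
        have "t \<in> {-1..1}" using inK that by auto
        then show ?thesis using constD[OF DF1[of t] that, of 1] F1one by auto
      qed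
      define m where "m = (p + a) / 2"
      have m: "m \<in> {p<..<a}" using pa m_def by auto
      have mI: "m \<in> {-1..1}" using inK m by auto
      have "F3 m = 0"
        using constD[OF DF2[OF mI] m, of 0] F2zero by auto
      moreover have "F3 m * F1 m - 3/2 * (F2 m)^2 < 0"
        using schF[of m] inK[of m] g1n[of m] m by auto
      ultimately show False using F2zero[OF m] by simp
    qed
  qed
  have gp: "g p = p" using ap a_def by simp
  have q0p: "q0 = p" by (rule fixuniq) (use q0pos q0(2) p01 gp in auto)
  have g1pn: "g1 p < 0" using negK p01 pc1 by simp
  define nu where "nu = - g1 p"
  have nupos: "nu > 0" using g1pn nu_def by simp
  have F1pv: "F1 p = nu^2" unfolding F1_def nu_def using gp by (simp add: power2_eq_square)
  have nu1: "nu \<ge> 1"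
  proof (rule ccontr)
    assume "\<not> nu \<ge> 1"
    then have "nu * nu < 1 * 1" using nupos by (intro mult_strict_mono) auto
    then have "nu^2 < 1" by (simp add: power2_eq_square)
    then show False using F1p F1pv by simp
  qed
  have nugt: "nu > 1"
  proof (rule ccontr)
    assume "\<not> nu > 1"
    then have nueq: "nu = 1" using nu1 by simp
    then have g1pv: "g1 p = -1" using nu_def by simp
    have F1p1: "F1 p = 1" using F1pv nueq by simp
    have F2p: "F2 p = 0" unfolding F2_def using gp g1pv by simp
    have "F3 p * F1 p - 3/2 * (F2 p)^2 < 0" using schF[OF pI(1)] g1pv gp by simp
    then have F3n: "F3 p < 0" using F1p1 F2p by simp
    obtain d where d: "d > 0" "\<And>h. h > 0 \<Longrightarrow> h < d \<Longrightarrow> F2 p < F2 (p - h)"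
      using DERIV_neg_dec_left[OF DF2[OF pI(1)] F3n] by blast
    define h where "h = min d p / 2"
    have hmin: "min d p \<le> d" "min d p \<le> p" "min d p > 0" using d(1) p01 by auto
    have h: "h > 0" "h < d" "p - h \<ge> 0" using hmin unfolding h_def by (auto simp: field_simps)
    have sI: "s \<in> {-1..1}" if "p - h \<le> s" "s \<le> p" for s using that h p01 by auto
    have F2pos: "F2 s > 0" if "p - h \<le> s" "s < p" for s
    proof -
      have "F2 p < F2 (p - (p - s))" using d(2)[of "p - s"] that h by auto
      then show ?thesis using F2p by simp
    qed
    have F1lt: "F1 s < 1" if "p - h \<le> s" "s < p" for s
    proof -
      have "F1 s < F1 p"
      proof (rule DERIV_pos_imp_increasing_open[of s p F1])
        show "s < p" by fact
        show "\<exists>y. (F1 has_real_derivative y) (at t) \<and> 0 < y" if "s < t" "t < p" for t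
          using DF1[OF sI[of t]] F2pos[of t] that \<open>p - h \<le> s\<close> by auto
        show "continuous_on {s..p} F1"
          using DF1 sI that by (meson DERIV_isCont atLeastAtMost_iff continuous_at_imp_continuous_on order_trans)
      qed
      then show ?thesis using F1p1 by simp
    qed
    have "H (p - h) > H p"
    proof (rule DERIV_neg_imp_decreasing_open[of "p - h" p H])
      show "p - h < p" using h by simp
      show "\<exists>y. (H has_real_derivative y) (at t) \<and> y < 0" if "p - h < t" "t < p" for t
        using DH[OF sI[of t]] F1lt[of t] that by auto
      show "continuous_on {p - h..p} H"
        using DH sI by (meson DERIV_isCont atLeastAtMost_iff continuous_at_imp_continuous_on)
    qed
    moreover have "H (p - h) < 0" unfolding H_def using gsq[of "p - h"] h by simp
    ultimately show False using Hp by simp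
  qed
  define r where "r = (\<lambda>x. g1 (g (- x / lam)) * g1 (- x / lam))"
  have rc: "isCont r x0" if "x0 \<in> {-1..1}" for x0
  proof -
    have yI: "- x0 / lam \<in> {-1..1}" using that lam0 by (auto simp: field_simps)
    have i1: "isCont (\<lambda>x. - x / lam) x0" using lam0 by (intro continuous_intros) auto
    have i2: "isCont (\<lambda>x. g (- x / lam)) x0" using isCont_o2[OF i1 cg[OF yI]] .
    have i3: "isCont (\<lambda>x. g1 (g (- x / lam))) x0" using isCont_o2[OF i2 cg1[OF mapsI[OF yI]]] .
    have i4: "isCont (\<lambda>x. g1 (- x / lam)) x0" using isCont_o2[OF i1 cg1[OF yI]] .
    show ?thesis unfolding r_def using isCont_mult[OF i3 i4] .
  qed
  have g1m1: "g1 (-1) = nu^2"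
  proof -
    have "g1 (-1) = r (-1)"
      by (rule eq_at_left_end[where f=g1 and h=r and u="-1" and v=1]) (use cg1 rc did r_def in auto)
    also have "\<dots> = g1 p * g1 p" unfolding r_def p_def using gp p_def by simp
    finally show ?thesis using nu_def by (simp add: power2_eq_square)
  qed
  have g11: "g1 1 = - (nu^2)"
  proof -
    have "g1 1 = r 1"
      by (rule eq_at_right_end[where f=g1 and h=r and u="-1" and v=1]) (use cg1 rc did r_def in auto)
    also have "\<dots> = g1 (g (- p)) * g1 (- p)" unfolding r_def p_def by simp
    also have "\<dots> = - (g1 p * g1 p)" using evenI[OF pI(1)] gp dodd[of p] p01 by simp
    finally show ?thesis using nu_def by (simp add: power2_eq_square)
  qed
  have g1mp: "g1 (-p) = nu" using dodd[of p] p01 nu_def by simp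
  have hq0v: "hq0 = - p"
  proof -
    have ghq: "g hq0 = p" using hq0(3) q0(2) q0p by simp
    have "\<not> hq0 \<ge> 0"
    proof
      assume "hq0 \<ge> 0"
      then show False using decR[of hq0 p] decR[of p hq0] hq0 q0p ghq gp p01
        by (cases "hq0 < p") auto
    qed
    then have gmh: "g (- hq0) = p" using evenI hq0(1) ghq by auto
    have h1: "0 \<le> - hq0" "- hq0 \<le> 1" using hq0(1) \<open>\<not> hq0 \<ge> 0\<close> by auto
    have "- hq0 = p"
    proof (rule ccontr)
      assume ne: "- hq0 \<noteq> p"
      show False
      proof (cases "- hq0 < p")
        case True
        then have "g (- hq0) > g p" using decR[of "-hq0" p] h1 p01 by auto
        then show False using gmh gp by simp
      next
        case False
        then have "p < - hq0" using ne by simp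
        then have "g p > g (- hq0)" using decR[of p "-hq0"] h1 p01 by auto
        then show False using gmh gp by simp
      qed
    qed
    then show ?thesis by simp
  qed
  have hm1v: "hm1 = 1"
  proof -
    have gh: "g hm1 = -1" using hm1(3) fix_m1 by simp
    have "\<not> hm1 \<le> 0"
    proof
      assume "hm1 \<le> 0"
      then show False using incL[of "-1" hm1] hm1 gh fix_m1 by auto
    qed
    then show ?thesis using decR[of hm1 1] hm1 gh g1 by (cases "hm1 = 1") auto
  qed
  have nusq: "nu \<le> nu^2" using nugt by (simp add: power2_eq_square)
  have dq: "\<bar>deriv g q0\<bar> = nu" using q0p g1pn nu_def g1_def by simp
  show ?thesis
  proof
    fix x assume x: "x \<in> {-1..hq0} \<union> {q0..hm1}"
    have "\<bar>g1 x\<bar> \<ge> nu"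
    proof (cases "x \<le> - p")
      case True
      then have xI: "x \<in> {-1..-p}" using x hq0v q0p p01 by auto
      have "g1 x \<ge> min (g1 (-1)) (g1 (-p))"
      proof (rule MP[of "-1" "-p" g1 g2 g3])
        show "-1 \<le> -p" using p01 by simp
        show "(g1 has_real_derivative g2 y) (at y)" if "y \<in> {-1..-p}" for y using D2 that p01 by auto
        show "(g2 has_real_derivative g3 y) (at y)" if "y \<in> {-1..-p}" for y using D3 that p01 by auto
        show "g1 y > 0" if "y \<in> {-1..-p}" for y using posL that p01 by auto
        show "g3 y * g1 y - 3/2 * (g2 y)^2 < 0" if "y \<in> {-1..-p}" for y
          using sch[of y] posL[of y] that p01 by auto
        show "x \<in> {-1..-p}" by fact
      qed
      then have "g1 x \<ge> nu" using g1m1 g1mp nusq by simp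
      then show ?thesis by simp
    next
      case False
      then have xI: "x \<in> {p..1}" using x hq0v q0p hm1v p01 by auto
      have mg1: "(\<lambda>t. - g1 t) y > 0" if "y \<in> {p..1}" for y
        using negR[of y] g11 nupos that p01 by (cases "y = 1") auto
      have "(\<lambda>t. - g1 t) x \<ge> min ((\<lambda>t. - g1 t) p) ((\<lambda>t. - g1 t) 1)"
      proof (rule MP[of p 1 "\<lambda>t. - g1 t" "\<lambda>t. - g2 t" "\<lambda>t. - g3 t"])
        show "p \<le> 1" using p01 by simp
        show "((\<lambda>t. - g1 t) has_real_derivative - g2 y) (at y)" if "y \<in> {p..1}" for y
          using DERIV_minus[OF D2[of y]] that p01 by auto
        show "((\<lambda>t. - g2 t) has_real_derivative - g3 y) (at y)" if "y \<in> {p..1}" for y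
          using DERIV_minus[OF D3[of y]] that p01 by auto
        show "(\<lambda>t. - g1 t) y > 0" if "y \<in> {p..1}" for y using mg1 that by blast
        show "- g3 y * - g1 y - 3/2 * (- g2 y)^2 < 0" if "y \<in> {p..1}" for y
          using sch[of y] mg1[OF that] that p01 by auto
        show "x \<in> {p..1}" by fact
      qed
      then have "- g1 x \<ge> nu" using g11 nu_def nusq by simp
      then show ?thesis by simp
    qed
    then show "\<bar>deriv g x\<bar> \<ge> \<bar>deriv g q0\<bar> \<and> \<bar>deriv g q0\<bar> > 1"
      using dq nugt g1_def by simp
  qed
qed

end
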